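(* Let $\Delta\in(0,1)$. (i) If $N\ge 8\gamma_{4k}^{-1}\ln(2/\Delta)+12k\ln(2R/\Delta)$ (with $\gamma_{4k}>0$), then with probability at least $1-\Delta$, $$1-\widehat\tau\ge\frac{C}{2}\left[1+\frac{1-\gamma_{4k}}{\gamma_{4k}}\bar C\right]^{-1}(1-\tau).$$ (ii) If $N\ge 3\gamma_{2k}^{-1}\ln(2/\Delta)+16k\ln(2R/\Delta)$ (with $\gamma_{2k}>0$), then with probability at least $1-\Delta$, $$1-\tau\ge\frac{C}{2}\left[1+\frac{1-\widehat\gamma_{4k}}{\widehat\gamma_{4k}}\bar C\right]^{-1}(1-\widehat\tau)$$ (where the right-hand side is read as $0$ if $\widehat\gamma_{4k}=0$).
   Context: Let $R\ge 2$ be an integer and $\rho=(\rho_1,\dots,\rho_R)$ a probability vector with $\rho_r>0$ for all $r$. Let $Y_1,\dots,Y_N$ be i.i.d. labels with $\mathbb P(Y_j=r)=\rho_r$, $N_r=|\{j:Y_j=r\}|$, $\widehat\rho_r=N_r/N$. Fix an integer $k\ge1$. Set $\tau:=1-\sum_{r}\rho_r(1-\rho_r)^k$ and $\widehat\tau:=1-\sum_r\widehat\rho_r(1-\widehat\rho_r)^k$. For $\alpha\ge1$ define $\gamma_\alpha:=\sum_{r:\rho_r\le 1/\alpha}\rho_r$ and $\widehat\gamma_\alpha:=\sum_{r:\widehat\rho_r\le1/\alpha}\widehat\rho_r$. Let $C:=\inf_{k'\ge1}\left(1-\frac{1}{2k'}\right)^{k'}$ and $\bar C:=\sup_{k'\ge1}\left(1-\frac{1}{4k'}\right)^{k'}$,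 the infimum/supremum over positive integers $k'$. *)

theory Defs
  imports "HOL-Analysis.Analysis"
begin

text \<open>Labels are 0..R-1 (instead of 1..R); a label sample is a function
  Y on {..<N} with values in {..<R}.\<close>

text \<open>Probability of an event E under N i.i.d. labels with law rho:
  the product distribution, written as an explicit finite sum.\<close>
definition sample_prob :: "nat \<Rightarrow> nat \<Rightarrow> (nat \<Rightarrow> real) \<Rightarrow> ((nat \<Rightarrow> nat) \<Rightarrow> bool) \<Rightarrow> real" where
  "sample_prob R N rho E =
     (\<Sum>Y\<in>{Y \<in> {..<N} \<rightarrow>\<^sub>E {..<R}. E Y}. \<Prod>j<N. rho (Y j))"

definition emp_freq :: "nat \<Rightarrow> (nat \<Rightarrow> nat) \<Rightarrow> nat \<Rightarrow> real" where
  "emp_freq N Y r = real (card {j. j < N \<and> Y j = r}) / real N"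

definition tau_of :: "nat \<Rightarrow> nat \<Rightarrow> (nat \<Rightarrow> real) \<Rightarrow> real" where
  "tau_of R k p = 1 - (\<Sum>r<R. p r * (1 - p r) ^ k)"

definition gamma_of :: "nat \<Rightarrow> real \<Rightarrow> (nat \<Rightarrow> real) \<Rightarrow> real" where
  "gamma_of R \<alpha> p = (\<Sum>r\<in>{r. r < R \<and> p r \<le> 1 / \<alpha>}. p r)"

definition C_const :: real where
  "C_const = (INF k'\<in>{1::nat..}. (1 - 1 / (2 * real k')) ^ k')"

definition Cbar_const :: real where
  "Cbar_const = (SUP k'\<in>{1::nat..}. (1 - 1 / (4 * real k')) ^ k')"

end

theory Submission
  imports Defs
begin


definition cnt :: "nat \<Rightarrow> nat set \<Rightarrow> (nat \<Rightarrow> nat) \<Rightarrow> real" where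
  "cnt N S Y = (\<Sum>j<N. if Y j \<in> S then 1 else 0)"

lemma sp_alt: "sample_prob R N rho E = (\<Sum>Y\<in>{..<N} \<rightarrow>\<^sub>E {..<R}. if E Y then (\<Prod>j<N. rho (Y j)) else 0)"
  unfolding sample_prob_def by (rule sum.inter_filter) (simp add: finite_PiE)

lemma w_nonneg: fixes rho :: "nat \<Rightarrow> real" assumes "\<And>r. r < R \<Longrightarrow> rho r \<ge> 0" "Y \<in> {..<N} \<rightarrow>\<^sub>E {..<R}"
  shows "(\<Prod>j<N. rho (Y j)) \<ge> 0"
  by (rule prod_nonneg) (use assms in \<open>auto simp: PiE_def Pi_def\<close>)

lemma factor: fixes R N :: nat shows "(\<Sum>Y\<in>{..<N} \<rightarrow>\<^sub>E {..<R}. \<Prod>j<N. g (Y j)) = (\<Sum>r<R. (g r :: real)) ^ N"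
proof -
  have "(\<Prod>j\<in>{..<N}. \<Sum>r\<in>{..<R}. g r) = (\<Sum>Y\<in>{..<N} \<rightarrow>\<^sub>E {..<R}. \<Prod>j<N. g (Y j))"
    by (rule prod_sum_PiE) auto
  then show ?thesis by simp
qed

lemma sp_mono:
  assumes nn: "\<And>r. r < R \<Longrightarrow> rho r \<ge> 0" and imp: "\<And>Y. Y \<in> {..<N} \<rightarrow>\<^sub>E {..<R} \<Longrightarrow> E Y \<Longrightarrow> F Y"
  shows "sample_prob R N rho E \<le> sample_prob R N rho F"
  unfolding sp_alt
  by (rule sum_mono) (use imp w_nonneg[OF nn] in auto)

lemma sp_total:
  assumes "(\<Sum>r<R. rho r) = 1"
  shows "sample_prob R N rho (\<lambda>Y. True) = 1"
  unfolding sp_alt using factor[where g=rho and R=R and N=N, symmetric] assms by simp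

lemma sp_compl:
  assumes "(\<Sum>r<R. rho r) = 1"
  shows "sample_prob R N rho (\<lambda>Y. \<not> E Y) = 1 - sample_prob R N rho E"
proof -
  have "sample_prob R N rho (\<lambda>Y. \<not> E Y) + sample_prob R N rho E = sample_prob R N rho (\<lambda>Y. True)"
    unfolding sp_alt by (subst sum.distrib[symmetric]) (rule sum.cong, auto)
  then show ?thesis using sp_total[OF assms] by simp
qed

lemma sp_union:
  assumes nn: "\<And>r. r < R \<Longrightarrow> rho r \<ge> 0"
  shows "sample_prob R N rho (\<lambda>Y. E Y \<or> F Y) \<le> sample_prob R N rho E + sample_prob R N rho F"
  unfolding sp_alt sum.distrib[symmetric]
  by (rule sum_mono) (use w_nonneg[OF nn] in auto)

lemma sp_Union:
  assumes nn: "\<And>r. r < R \<Longrightarrow> rho r \<ge> 0" and fin: "finite A"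
  shows "sample_prob R N rho (\<lambda>Y. \<exists>a\<in>A. E a Y) \<le> (\<Sum>a\<in>A. sample_prob R N rho (E a))"
  using fin
proof (induction A rule: finite_induct)
  case empty
  then show ?case by (simp add: sample_prob_def)
next
  case (insert x F)
  have "sample_prob R N rho (\<lambda>Y. \<exists>a\<in>insert x F. E a Y) = sample_prob R N rho (\<lambda>Y. E x Y \<or> (\<exists>a\<in>F. E a Y))"
    by simp
  also have "\<dots> \<le> sample_prob R N rho (E x) + sample_prob R N rho (\<lambda>Y. \<exists>a\<in>F. E a Y)"
    by (rule sp_union[OF nn])
  also have "\<dots> \<le> sample_prob R N rho (E x) + (\<Sum>a\<in>F. sample_prob R N rho (E a))"
    using insert by simp
  finally show ?case using insert by simp
qed

lemma mgf:
  assumes sum1: "(\<Sum>r<R. rho r) = 1" and SR: "S \<subseteq> {..<R}"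
  shows "(\<Sum>Y\<in>{..<N} \<rightarrow>\<^sub>E {..<R}. (\<Prod>j<N. rho (Y j)) * exp (t * cnt N S Y))
         = (1 + (\<Sum>r\<in>S. rho r) * (exp t - 1)) ^ N"
proof -
  have "(\<Prod>j<N. rho (Y j)) * exp (t * cnt N S Y) = (\<Prod>j<N. rho (Y j) * exp (t * (if Y j \<in> S then 1 else 0)))" for Y
    unfolding cnt_def sum_distrib_left exp_sum[OF finite_lessThan] prod.distrib by simp
  then have "(\<Sum>Y\<in>{..<N} \<rightarrow>\<^sub>E {..<R}. (\<Prod>j<N. rho (Y j)) * exp (t * cnt N S Y))
     = (\<Sum>r<R. rho r * exp (t * (if r \<in> S then 1 else 0))) ^ N"
    using factor[where R=R and N=N and g="\<lambda>r. rho r * exp (t * (if r \<in> S then 1 else 0))"] by simp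
  also have "(\<Sum>r<R. rho r * exp (t * (if r \<in> S then 1 else 0))) = (\<Sum>r<R. rho r + (if r \<in> S then rho r * (exp t - 1) else 0))"
    by (rule sum.cong) (auto simp: algebra_simps)
  also have "\<dots> = 1 + (\<Sum>r\<in>S. rho r) * (exp t - 1)"
    using SR by (simp add: sum.distrib sum1 sum.If_cases Int_absorb1 sum_distrib_right)
  finally show ?thesis .
qed

lemma chernoff:
  assumes nn: "\<And>r. r < R \<Longrightarrow> rho r \<ge> 0" and sum1: "(\<Sum>r<R. rho r) = 1" and SR: "S \<subseteq> {..<R}"
    and imp: "\<And>Y. Y \<in> {..<N} \<rightarrow>\<^sub>E {..<R} \<Longrightarrow> E Y \<Longrightarrow> t * a \<le> t * cnt N S Y"
  shows "sample_prob R N rho E \<le> exp (real N * (\<Sum>r\<in>S. rho r) * (exp t - 1) - t * a)"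
proof -
  let ?p = "\<Sum>r\<in>S. rho r"
  have p0: "?p \<ge> 0" using nn SR by (intro sum_nonneg) auto
  have p1: "?p \<le> 1"
  proof -
    have "?p \<le> (\<Sum>r<R. rho r)" using SR nn by (intro sum_mono2) auto
    then show ?thesis using sum1 by simp
  qed
  have "sample_prob R N rho E \<le> (\<Sum>Y\<in>{..<N} \<rightarrow>\<^sub>E {..<R}. (\<Prod>j<N. rho (Y j)) * exp (t * cnt N S Y - t * a))"
    unfolding sp_alt
  proof (rule sum_mono)
    fix Y assume Y: "Y \<in> {..<N} \<rightarrow>\<^sub>E {..<R}"
    have w: "(\<Prod>j<N. rho (Y j)) \<ge> 0" by (rule w_nonneg[OF nn Y])
    show "(if E Y then \<Prod>j<N. rho (Y j) else 0) \<le> (\<Prod>j<N. rho (Y j)) * exp (t * cnt N S Y - t * a)"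
    proof (cases "E Y")
      case True
      then have "1 \<le> exp (t * cnt N S Y - t * a)" using imp[OF Y] by simp
      then show ?thesis using True w by (simp add: mult_le_cancel_left1)
    qed (use w in simp)
  qed
  also have "\<dots> = exp (- t * a) * (\<Sum>Y\<in>{..<N} \<rightarrow>\<^sub>E {..<R}. (\<Prod>j<N. rho (Y j)) * exp (t * cnt N S Y))"
    unfolding sum_distrib_left by (rule sum.cong) (simp_all add: exp_diff exp_minus field_simps)
  also have "\<dots> = exp (- t * a) * (1 + ?p * (exp t - 1)) ^ N"
    by (simp add: mgf[OF sum1 SR])
  also have "\<dots> \<le> exp (- t * a) * exp (?p * (exp t - 1)) ^ N"
  proof -
    have "0 \<le> 1 + ?p * (exp t - 1)"
    proof -
      have "1 + ?p * (exp t - 1) = (1 - ?p) + ?p * exp t" by (simp add: algebra_simps)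
      then show ?thesis using p0 p1 by (metis add_nonneg_nonneg diff_ge_0_iff_ge exp_ge_zero mult_nonneg_nonneg)
    qed
    then show ?thesis by (intro mult_left_mono power_mono) auto
  qed
  also have "\<dots> = exp (real N * ?p * (exp t - 1) - t * a)"
    by (simp add: exp_of_nat_mult[symmetric] exp_add[symmetric] algebra_simps)
  finally show ?thesis .
qed

lemma ln2_le: "ln (2::real) \<le> 3/4"
proof -
  have "1 + 3/4 + (3/4)\<^sup>2/2 \<le> exp (3/4::real)" by (rule exp_lower_Taylor_quadratic) simp
  then have "2 \<le> exp (3/4::real)" by (simp add: power2_eq_square)
  then show ?thesis by (metis exp_gt_zero ln_exp ln_le_cancel_iff zero_less_numeral)
qed

lemma upper_tail:
  assumes nn: "\<And>r. r < R \<Longrightarrow> rho r \<ge> 0" and sum1: "(\<Sum>r<R. rho r) = 1" and SR: "S \<subseteq> {..<R}"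
    and m: "m \<ge> 0" "real N * (\<Sum>r\<in>S. rho r) \<le> m"
    and imp: "\<And>Y. Y \<in> {..<N} \<rightarrow>\<^sub>E {..<R} \<Longrightarrow> E Y \<Longrightarrow> 2 * m \<le> cnt N S Y"
  shows "sample_prob R N rho E \<le> exp (- m / 3)"
proof -
  have l2: "ln (2::real) \<ge> 2/3" by (rule ln2_ge_two_thirds)
  have "sample_prob R N rho E \<le> exp (real N * (\<Sum>r\<in>S. rho r) * (exp (ln 2) - 1) - ln 2 * (2 * m))"
    by (rule chernoff[OF nn sum1 SR]) (use imp l2 in auto)
  also have "\<dots> \<le> exp (- m / 3)"
  proof -
    have "real N * (\<Sum>r\<in>S. rho r) * (exp (ln 2) - 1) - ln 2 * (2 * m) \<le> m - ln 2 * (2 * m)"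
      using m by simp
    also have "\<dots> \<le> - m / 3"
    proof -
      have "m * (2/3) \<le> m * ln 2" using l2 m by (intro mult_left_mono) auto
      moreover have "ln 2 * (2*m) = 2*(m*ln 2)" by simp
      ultimately show ?thesis by linarith
    qed
    finally show ?thesis by simp
  qed
  finally show ?thesis .
qed

lemma lower_tail:
  assumes nn: "\<And>r. r < R \<Longrightarrow> rho r \<ge> 0" and sum1: "(\<Sum>r<R. rho r) = 1" and SR: "S \<subseteq> {..<R}"
    and m: "m \<ge> 0" "m \<le> real N * (\<Sum>r\<in>S. rho r)"
    and imp: "\<And>Y. Y \<in> {..<N} \<rightarrow>\<^sub>E {..<R} \<Longrightarrow> E Y \<Longrightarrow> cnt N S Y \<le> m / 2"
  shows "sample_prob R N rho E \<le> exp (- m / 8)"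
proof -
  have l2: "ln (2::real) \<le> 3/4" by (rule ln2_le)
  have l0: "ln (2::real) > 0" by simp
  have "sample_prob R N rho E \<le> exp (real N * (\<Sum>r\<in>S. rho r) * (exp (- ln 2) - 1) - (- ln 2) * (m / 2))"
  proof (rule chernoff[OF nn sum1 SR])
    fix Y assume "Y \<in> {..<N} \<rightarrow>\<^sub>E {..<R}" "E Y"
    then have "cnt N S Y \<le> m / 2" by (rule imp)
    then show "- ln 2 * (m / 2) \<le> - ln 2 * cnt N S Y" using l0 by simp
  qed
  also have "\<dots> \<le> exp (- m / 8)"
  proof -
    have e: "exp (- ln 2) = (1/2::real)" by (simp add: exp_minus)
    have "real N * (\<Sum>r\<in>S. rho r) * (exp (- ln 2) - 1) - (- ln 2) * (m / 2) \<le> - m / 2 + ln 2 * (m / 2)"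
      using m unfolding e by simp
    also have "\<dots> \<le> - m / 8"
    proof -
      have "ln 2 * (m / 2) \<le> 3/4 * (m / 2)" using l2 m by (intro mult_right_mono) auto
      then show ?thesis by linarith
    qed
    finally show ?thesis by simp
  qed
  finally show ?thesis .
qed

lemma cnt_card: "real (card {j. j < N \<and> Y j = r}) = cnt N {r} Y"
proof -
  have "{j. j < N \<and> Y j = r} = {j \<in> {..<N}. Y j = r}" by auto
  then have "real (card {j. j < N \<and> Y j = r}) = (\<Sum>j\<in>{j \<in> {..<N}. Y j = r}. 1)" by simp
  also have "\<dots> = cnt N {r} Y" unfolding cnt_def by (subst sum.inter_filter) auto
  finally show ?thesis .
qed

lemma emp_cnt: "emp_freq N Y r = cnt N {r} Y / real N"
  unfolding emp_freq_def cnt_card ..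

lemma cnt_nonneg: "cnt N S Y \<ge> 0"
  unfolding cnt_def by (rule sum_nonneg) auto

lemma sum_cnt: assumes "finite S" shows "(\<Sum>r\<in>S. cnt N {r} Y) = cnt N S Y"
proof -
  have "(\<Sum>r\<in>S. cnt N {r} Y) = (\<Sum>j<N. \<Sum>r\<in>S. if Y j = r then 1 else 0)"
    unfolding cnt_def by (subst sum.swap) simp
  also have "\<dots> = cnt N S Y" unfolding cnt_def using assms by (intro sum.cong) auto
  finally show ?thesis .
qed

lemma cnt_all: assumes "Y \<in> {..<N} \<rightarrow>\<^sub>E {..<R}" shows "cnt N {..<R} Y = real N"
  unfolding cnt_def using assms by (auto simp: PiE_def Pi_def)

lemma emp_sum: assumes "Y \<in> {..<N} \<rightarrow>\<^sub>E {..<R}" "N > 0"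
  shows "(\<Sum>r<R. emp_freq N Y r) = 1"
  unfolding emp_cnt sum_divide_distrib[symmetric] sum_cnt[OF finite_lessThan] cnt_all[OF assms(1)]
  using assms(2) by simp

lemma emp_nonneg: "emp_freq N Y r \<ge> 0"
  unfolding emp_freq_def by simp

lemma bern_half:
  fixes p :: real assumes "0 \<le> p" "p \<le> 1 / (2 * real k)" "k \<ge> 1"
  shows "p / 2 \<le> p * (1 - p) ^ k"
proof -
  have kp: "real k * p \<le> 1/2" using assms by (simp add: field_simps)
  have "p \<le> 1" using assms mult_right_mono[of 1 "real k" p] kp by simp
  have "1 + real k * (- p) \<le> (1 + - p) ^ k" by (rule Bernoulli_inequality) (use \<open>p \<le> 1\<close> in simp)
  then have "1/2 \<le> (1 - p) ^ k" using kp by simp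
  then show ?thesis using assms(1) by (metis mult_left_mono mult.commute times_divide_eq_right mult_1 divide_inverse)
qed

lemma C_le: "C_const \<le> 1/2"
proof -
  have "bdd_below ((\<lambda>k'. (1 - 1 / (2 * real k')) ^ k') ` {1::nat..})"
  proof (rule bdd_belowI2[where m=0])
    fix k' :: nat assume "k' \<in> {1..}"
    then have "1 / (2 * real k') \<le> 1" by (simp add: field_simps)
    then show "0 \<le> (1 - 1 / (2 * real k')) ^ k'" by simp
  qed
  then have "C_const \<le> (1 - 1 / (2 * real (1::nat))) ^ 1" unfolding C_const_def
    by (intro cINF_lower) auto
  then show ?thesis by simp
qed

lemma Cbar_ge: assumes "k \<ge> 1" shows "(1 - 1 / (4 * real k)) ^ k \<le> Cbar_const"
proof -
  have "bdd_above ((\<lambda>k'. (1 - 1 / (4 * real k')) ^ k') ` {1::nat..})"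
  proof (rule bdd_aboveI2[where M=1])
    fix k' :: nat assume "k' \<in> {1..}"
    then have "1 / (4 * real k') \<le> 1" "0 \<le> 1 / (4 * real k')" by (simp_all add: field_simps)
    then show "(1 - 1 / (4 * real k')) ^ k' \<le> 1" by (intro power_le_one) auto
  qed
  then show ?thesis unfolding Cbar_const_def using assms by (intro cSUP_upper) auto
qed

lemma Cbar_pos: "Cbar_const > 0"
proof -
  have "(1 - 1 / (4 * real (1::nat))) ^ 1 \<le> Cbar_const" by (rule Cbar_ge) simp
  then show ?thesis by simp
qed

lemma p_le1: fixes p :: "nat \<Rightarrow> real"
  assumes nn: "\<And>r. r < R \<Longrightarrow> p r \<ge> 0" and s1: "(\<Sum>r<R. p r) = 1" and r: "r < R"
  shows "p r \<le> 1"
proof -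
  have "p r \<le> (\<Sum>r<R. p r)" by (rule member_le_sum) (use nn r in auto)
  then show ?thesis using s1 by simp
qed

lemma one_minus_tau: "1 - tau_of R k p = (\<Sum>r<R. p r * (1 - p r) ^ k)"
  unfolding tau_of_def by simp

lemma tau_nonneg: fixes p :: "nat \<Rightarrow> real"
  assumes nn: "\<And>r. r < R \<Longrightarrow> p r \<ge> 0" and s1: "(\<Sum>r<R. p r) = 1"
  shows "0 \<le> 1 - tau_of R k p"
  unfolding one_minus_tau using nn p_le1[OF nn s1] by (intro sum_nonneg) auto

lemma sum_half: fixes p :: "nat \<Rightarrow> real"
  assumes nn: "\<And>r. r < R \<Longrightarrow> p r \<ge> 0" and s1: "(\<Sum>r<R. p r) = 1" and SR: "S \<subseteq> {..<R}"
    and small: "\<And>r. r \<in> S \<Longrightarrow> p r \<le> 1 / (2 * real k)" and k: "k \<ge> 1"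
  shows "(\<Sum>r\<in>S. p r) / 2 \<le> 1 - tau_of R k p"
proof -
  have "(\<Sum>r\<in>S. p r) / 2 = (\<Sum>r\<in>S. p r / 2)" by (simp add: sum_divide_distrib)
  also have "\<dots> \<le> (\<Sum>r\<in>S. p r * (1 - p r) ^ k)"
    by (rule sum_mono, rule bern_half) (use nn small SR k in auto)
  also have "\<dots> \<le> (\<Sum>r<R. p r * (1 - p r) ^ k)"
    by (rule sum_mono2) (use SR nn p_le1[OF nn s1] in auto)
  finally show ?thesis unfolding one_minus_tau .
qed

lemma tau_upper: fixes p :: "nat \<Rightarrow> real"
  assumes nn: "\<And>r. r < R \<Longrightarrow> p r \<ge> 0" and s1: "(\<Sum>r<R. p r) = 1" and k: "k \<ge> 1"
  shows "1 - tau_of R k p \<le> gamma_of R (4 * real k) p + (1 - gamma_of R (4 * real k) p) * Cbar_const"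
proof -
  let ?P = "\<lambda>r. p r \<le> 1 / (4 * real k)"
  have split: "(\<Sum>r<R. if ?P r then g r else h r) = (\<Sum>r\<in>{r. r < R \<and> ?P r}. g r) + (\<Sum>r\<in>{r. r < R \<and> \<not> ?P r}. h r)" for g h :: "nat \<Rightarrow> real"
  proof -
    have "{..<R} \<inter> {r. ?P r} = {r. r < R \<and> ?P r}" "{..<R} \<inter> - {r. ?P r} = {r. r < R \<and> \<not> ?P r}" by auto
    then show ?thesis by (simp add: sum.If_cases)
  qed
  have g1: "(\<Sum>r\<in>{r. r < R \<and> \<not> ?P r}. p r) = 1 - gamma_of R (4 * real k) p"
    using split[of p p] s1 unfolding gamma_of_def by simp
  have "1 - tau_of R k p \<le> (\<Sum>r<R. if ?P r then p r else p r * Cbar_const)"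
    unfolding one_minus_tau
  proof (rule sum_mono)
    fix r assume r: "r \<in> {..<R}"
    have p0: "p r \<ge> 0" and p1: "p r \<le> 1" using nn p_le1[OF nn s1] r by auto
    show "p r * (1 - p r) ^ k \<le> (if ?P r then p r else p r * Cbar_const)"
    proof (cases "?P r")
      case True
      have "(1 - p r) ^ k \<le> 1" using p0 p1 by (intro power_le_one) auto
      then show ?thesis using True p0 by (simp add: mult_left_le)
    next
      case False
      have "(1 - p r) ^ k \<le> (1 - 1 / (4 * real k)) ^ k" using False p1 by (intro power_mono) auto
      also have "\<dots> \<le> Cbar_const" by (rule Cbar_ge[OF k])
      finally show ?thesis using False p0 by (simp add: mult_left_mono)
    qed
  qed
  also have "\<dots> = gamma_of R (4 * real k) p + (1 - gamma_of R (4 * real k) p) * Cbar_const"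
    unfolding split gamma_of_def[symmetric] g1[symmetric] by (simp add: sum_distrib_right)
  finally show ?thesis .
qed

lemma gamma_le1: fixes p :: "nat \<Rightarrow> real"
  assumes nn: "\<And>r. r < R \<Longrightarrow> p r \<ge> 0" and s1: "(\<Sum>r<R. p r) = 1"
  shows "gamma_of R a p \<le> 1"
proof -
  have "gamma_of R a p \<le> (\<Sum>r<R. p r)" unfolding gamma_of_def by (rule sum_mono2) (use nn in auto)
  then show ?thesis using s1 by simp
qed

lemma key_bound: fixes p :: "nat \<Rightarrow> real"
  assumes nn: "\<And>r. r < R \<Longrightarrow> p r \<ge> 0" and s1: "(\<Sum>r<R. p r) = 1" and k: "k \<ge> 1"
    and gpos: "gamma_of R (4 * real k) p > 0"
  shows "C_const / 2 * inverse (1 + (1 - gamma_of R (4 * real k) p) / gamma_of R (4 * real k) p * Cbar_const)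
           * (1 - tau_of R k p) \<le> gamma_of R (4 * real k) p / 4"
proof -
  define g where "g = gamma_of R (4 * real k) p"
  define T where "T = 1 - tau_of R k p"
  define D where "D = 1 + (1 - g) / g * Cbar_const"
  have g0: "g > 0" and g1: "g \<le> 1" using gpos gamma_le1[OF nn s1] by (auto simp: g_def)
  have D0: "D > 0" unfolding D_def using g0 g1 Cbar_pos by (smt (verit) divide_nonneg_pos mult_nonneg_nonneg)
  have T0: "T \<ge> 0" unfolding T_def by (rule tau_nonneg[OF nn s1])
  have gD: "g * D = g + (1 - g) * Cbar_const" using g0 by (simp add: D_def field_simps)
  have "T \<le> g + (1 - g) * Cbar_const" unfolding T_def g_def by (rule tau_upper) (use nn s1 k in auto)
  then have TD: "T \<le> g * D" using gD by simp
  have a: "inverse D * T \<le> g" using TD D0 by (simp add: field_simps)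
  have b: "inverse D * T \<ge> 0" using D0 T0 by simp
  have "C_const / 2 * (inverse D * T) \<le> g / 4"
  proof (cases "C_const \<ge> 0")
    case True
    then have "C_const / 2 * (inverse D * T) \<le> C_const / 2 * g" using a by (intro mult_left_mono) auto
    also have "\<dots> \<le> 1/2/2 * g" using C_le g0 by (intro mult_right_mono) auto
    finally show ?thesis by simp
  next
    case False
    then have "C_const / 2 * (inverse D * T) \<le> 0" using b by (simp add: mult_nonpos_nonneg)
    then show ?thesis using g0 by linarith
  qed
  then show ?thesis unfolding g_def[symmetric] T_def[symmetric] D_def[symmetric] by (simp add: mult.assoc)
qed

lemma exp_neg_ln: "(x::real) > 0 \<Longrightarrow> exp (- ln x) = inverse x"
  by (simp add: exp_minus)

lemma part1:
  fixes R N k :: nat and rho :: "nat \<Rightarrow> real" and \<Delta> :: real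
  assumes R2: "R \<ge> 2"
    and rho_pos: "\<And>r. r < R \<Longrightarrow> rho r > 0"
    and rho_sum: "(\<Sum>r<R. rho r) = 1"
    and k1: "k \<ge> 1"
    and Delta: "0 < \<Delta>" "\<Delta> < 1"
    and gpos: "gamma_of R (4 * real k) rho > 0"
    and Nbig: "real N \<ge> 8 / gamma_of R (4 * real k) rho * ln (2 / \<Delta>) + 12 * real k * ln (2 * real R / \<Delta>)"
  shows "sample_prob R N rho (\<lambda>Y.
         1 - tau_of R k (emp_freq N Y) \<ge>
           C_const / 2 * inverse (1 + (1 - gamma_of R (4 * real k) rho) / gamma_of R (4 * real k) rho * Cbar_const)
           * (1 - tau_of R k rho)) \<ge> 1 - \<Delta>"
proof -
  have nn: "\<And>r. r < R \<Longrightarrow> rho r \<ge> 0" using rho_pos by (simp add: less_imp_le)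
  define g where "g = gamma_of R (4 * real k) rho"
  define S where "S = {r. r < R \<and> rho r \<le> 1 / (4 * real k)}"
  have SR: "S \<subseteq> {..<R}" by (auto simp: S_def)
  have finS: "finite S" using SR finite_subset by blast
  have cardS: "real (card S) \<le> real R" using card_mono[OF _ SR] by simp
  have gS: "g = (\<Sum>r\<in>S. rho r)" by (simp add: g_def S_def gamma_of_def)
  have g0: "g > 0" using gpos g_def by simp
  have k0: "real k > 0" using k1 by simp
  have R0: "real R > 0" using R2 by simp
  have l1: "ln (2 / \<Delta>) > 0" using Delta by simp
  have "1 < 2 * real R / \<Delta>" using Delta R2 by (simp add: less_divide_eq)
  then have l2: "ln (2 * real R / \<Delta>) > 0" by simp
  have h1: "real N * g \<ge> 8 * ln (2 / \<Delta>)"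
  proof -
    have "0 \<le> 12 * real k * ln (2 * real R / \<Delta>)" using k0 l2 by simp
    then have "8 / g * ln (2 / \<Delta>) \<le> real N" using Nbig unfolding g_def[symmetric] by linarith
    then show ?thesis using g0 by (simp add: divide_le_eq mult.commute)
  qed
  have h2: "real N \<ge> 12 * real k * ln (2 * real R / \<Delta>)"
  proof -
    have "0 \<le> 8 / g * ln (2 / \<Delta>)" using g0 l1 by simp
    then show ?thesis using Nbig unfolding g_def[symmetric] by linarith
  qed
  have "0 < 12 * real k * ln (2 * real R / \<Delta>)" using k0 l2 by simp
  then have Npos: "real N > 0" using h2 by linarith
  define Bad1 where "Bad1 = (\<lambda>Y. cnt N S Y \<le> real N * g / 2)"
  define Bad2 where "Bad2 = (\<lambda>r Y. 2 * (real N / (4 * real k)) \<le> cnt N {r} Y)"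
  have P1: "sample_prob R N rho Bad1 \<le> \<Delta> / 2"
  proof -
    have "sample_prob R N rho Bad1 \<le> exp (- (real N * g) / 8)"
    proof (rule lower_tail[OF nn rho_sum SR])
      show "0 \<le> real N * g" using g0 Npos by simp
      show "real N * g \<le> real N * sum rho S" using gS by simp
    qed (unfold Bad1_def, simp)
    also have "\<dots> \<le> exp (- ln (2 / \<Delta>))" using h1 by simp
    also have "\<dots> = \<Delta> / 2" using Delta by (simp add: exp_neg_ln)
    finally show ?thesis .
  qed
  have P2: "sample_prob R N rho (Bad2 r) \<le> \<Delta> / (2 * real R)" if r: "r \<in> S" for r
  proof -
    have "sample_prob R N rho (Bad2 r) \<le> exp (- (real N / (4 * real k)) / 3)"
    proof (rule upper_tail[OF nn rho_sum])
      show "{r} \<subseteq> {..<R}" using r SR by auto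
      show "0 \<le> real N / (4 * real k)" by simp
      have "rho r \<le> 1 / (4 * real k)" using r by (simp add: S_def)
      then have "real N * rho r \<le> real N * (1 / (4 * real k))" by (rule mult_left_mono) simp
      then show "real N * sum rho {r} \<le> real N / (4 * real k)" by simp
    qed (unfold Bad2_def, simp)
    also have "\<dots> \<le> exp (- ln (2 * real R / \<Delta>))"
    proof -
      have "ln (2 * real R / \<Delta>) \<le> real N / (12 * real k)" using h2 k0 by (simp add: pos_le_divide_eq mult.commute)
      moreover have "real N / (4 * real k) / 3 = real N / (12 * real k)" by simp
      ultimately show ?thesis by simp
    qed
    also have "\<dots> = \<Delta> / (2 * real R)" using Delta R0 by (simp add: exp_neg_ln)
    finally show ?thesis .
  qed
  define Bad where "Bad = (\<lambda>Y. Bad1 Y \<or> (\<exists>r\<in>S. Bad2 r Y))"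
  have PB: "sample_prob R N rho Bad \<le> \<Delta>"
  proof -
    have "sample_prob R N rho Bad \<le> sample_prob R N rho Bad1 + sample_prob R N rho (\<lambda>Y. \<exists>r\<in>S. Bad2 r Y)"
      unfolding Bad_def by (rule sp_union[OF nn])
    also have "\<dots> \<le> \<Delta> / 2 + (\<Sum>r\<in>S. sample_prob R N rho (Bad2 r))"
      using P1 sp_Union[where R=R and N=N and rho=rho and E=Bad2, OF nn finS] by simp
    also have "\<dots> \<le> \<Delta> / 2 + (\<Sum>r\<in>S. \<Delta> / (2 * real R))"
      by (rule add_left_mono, rule sum_mono, rule P2)
    also have "\<dots> = \<Delta> / 2 + real (card S) * (\<Delta> / (2 * real R))" by simp
    also have "\<dots> \<le> \<Delta> / 2 + real R * (\<Delta> / (2 * real R))"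
      using cardS Delta R0 by (intro add_left_mono mult_right_mono) auto
    also have "\<dots> = \<Delta>" using R0 by simp
    finally show ?thesis .
  qed
  have "1 - \<Delta> \<le> sample_prob R N rho (\<lambda>Y. \<not> Bad Y)"
    using PB sp_compl[OF rho_sum, of N Bad] by simp
  also have "\<dots> \<le> sample_prob R N rho (\<lambda>Y.
         1 - tau_of R k (emp_freq N Y) \<ge>
           C_const / 2 * inverse (1 + (1 - gamma_of R (4 * real k) rho) / gamma_of R (4 * real k) rho * Cbar_const)
           * (1 - tau_of R k rho))"
  proof (rule sp_mono[OF nn])
    fix Y assume Y: "Y \<in> {..<N} \<rightarrow>\<^sub>E {..<R}" and nb: "\<not> Bad Y"
    let ?p = "emp_freq N Y"
    have Nn: "N > 0" using Npos by simp
    have s1: "(\<Sum>r<R. ?p r) = 1" by (rule emp_sum[OF Y Nn])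
    have small: "?p r \<le> 1 / (2 * real k)" if "r \<in> S" for r
    proof -
      have "cnt N {r} Y < real N / (2 * real k)" using nb that unfolding Bad_def Bad2_def by auto
      then have "cnt N {r} Y / real N \<le> (real N / (2 * real k)) / real N"
        using Npos by (intro divide_right_mono) auto
      then show ?thesis using Npos by (simp add: emp_cnt)
    qed
    have "(\<Sum>r\<in>S. ?p r) / 2 \<le> 1 - tau_of R k ?p"
      by (rule sum_half[OF _ s1 SR small k1]) (simp add: emp_nonneg)
    moreover have "(\<Sum>r\<in>S. ?p r) = cnt N S Y / real N"
      unfolding emp_cnt sum_divide_distrib[symmetric] sum_cnt[OF finS] ..
    moreover have "cnt N S Y > real N * g / 2" using nb unfolding Bad_def Bad1_def by auto
    moreover have "cnt N S Y / real N > g / 2" using \<open>cnt N S Y > real N * g / 2\<close> Npos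
      by (simp add: less_divide_eq mult.commute)
    ultimately have "g / 4 \<le> 1 - tau_of R k ?p" by linarith
    moreover have "C_const / 2 * inverse (1 + (1 - g) / g * Cbar_const) * (1 - tau_of R k rho) \<le> g / 4"
      unfolding g_def by (rule key_bound[OF nn rho_sum k1 gpos])
    ultimately show "C_const / 2 * inverse (1 + (1 - gamma_of R (4 * real k) rho) / gamma_of R (4 * real k) rho * Cbar_const)
           * (1 - tau_of R k rho) \<le> 1 - tau_of R k ?p" unfolding g_def by linarith
  qed
  finally show ?thesis .
qed


lemma part2:
  fixes R N k :: nat and rho :: "nat \<Rightarrow> real" and \<Delta> :: real
  assumes R2: "R \<ge> 2"
    and rho_pos: "\<And>r. r < R \<Longrightarrow> rho r > 0"
    and rho_sum: "(\<Sum>r<R. rho r) = 1"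
    and k1: "k \<ge> 1"
    and Delta: "0 < \<Delta>" "\<Delta> < 1"
    and gpos: "gamma_of R (2 * real k) rho > 0"
    and Nbig: "real N \<ge> 3 / gamma_of R (2 * real k) rho * ln (2 / \<Delta>) + 16 * real k * ln (2 * real R / \<Delta>)"
  shows "sample_prob R N rho (\<lambda>Y.
         1 - tau_of R k rho \<ge>
           (if gamma_of R (4 * real k) (emp_freq N Y) = 0 then 0
            else C_const / 2 * inverse (1 + (1 - gamma_of R (4 * real k) (emp_freq N Y)) / gamma_of R (4 * real k) (emp_freq N Y) * Cbar_const)
              * (1 - tau_of R k (emp_freq N Y)))) \<ge> 1 - \<Delta>"
proof -
  have nn: "\<And>r. r < R \<Longrightarrow> rho r \<ge> 0" using rho_pos by (simp add: less_imp_le)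
  define g where "g = gamma_of R (2 * real k) rho"
  define S where "S = {r. r < R \<and> rho r \<le> 1 / (2 * real k)}"
  define L where "L = {r. r < R \<and> \<not> rho r \<le> 1 / (2 * real k)}"
  have SR: "S \<subseteq> {..<R}" by (auto simp: S_def)
  have LR: "L \<subseteq> {..<R}" by (auto simp: L_def)
  have finL: "finite L" using LR finite_subset by blast
  have finS: "finite S" using SR finite_subset by blast
  have cardL: "real (card L) \<le> real R" using card_mono[OF _ LR] by simp
  have gS: "g = (\<Sum>r\<in>S. rho r)" by (simp add: g_def S_def gamma_of_def)
  have g0: "g > 0" using gpos g_def by simp
  have k0: "real k > 0" using k1 by simp
  have R0: "real R > 0" using R2 by simp
  have l1: "ln (2 / \<Delta>) > 0" using Delta by simp
  have "1 < 2 * real R / \<Delta>" using Delta R2 by (simp add: less_divide_eq)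
  then have l2: "ln (2 * real R / \<Delta>) > 0" by simp
  have h1: "real N * g \<ge> 3 * ln (2 / \<Delta>)"
  proof -
    have "0 \<le> 16 * real k * ln (2 * real R / \<Delta>)" using k0 l2 by simp
    then have "3 / g * ln (2 / \<Delta>) \<le> real N" using Nbig unfolding g_def[symmetric] by linarith
    then show ?thesis using g0 by (simp add: divide_le_eq mult.commute)
  qed
  have h2: "real N \<ge> 16 * real k * ln (2 * real R / \<Delta>)"
  proof -
    have "0 \<le> 3 / g * ln (2 / \<Delta>)" using g0 l1 by simp
    then show ?thesis using Nbig unfolding g_def[symmetric] by linarith
  qed
  have "0 < 16 * real k * ln (2 * real R / \<Delta>)" using k0 l2 by simp
  then have Npos: "real N > 0" using h2 by linarith
  define Bad1 where "Bad1 = (\<lambda>Y. 2 * (real N * g) \<le> cnt N S Y)"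
  define Bad2 where "Bad2 = (\<lambda>r Y. cnt N {r} Y \<le> (real N / (2 * real k)) / 2)"
  have P1: "sample_prob R N rho Bad1 \<le> \<Delta> / 2"
  proof -
    have "sample_prob R N rho Bad1 \<le> exp (- (real N * g) / 3)"
    proof (rule upper_tail[OF nn rho_sum SR])
      show "0 \<le> real N * g" using g0 Npos by simp
      show "real N * sum rho S \<le> real N * g" using gS by simp
    qed (unfold Bad1_def, simp)
    also have "\<dots> \<le> exp (- ln (2 / \<Delta>))" using h1 by simp
    also have "\<dots> = \<Delta> / 2" using Delta by (simp add: exp_neg_ln)
    finally show ?thesis .
  qed
  have P2: "sample_prob R N rho (Bad2 r) \<le> \<Delta> / (2 * real R)" if r: "r \<in> L" for r
  proof -
    have "sample_prob R N rho (Bad2 r) \<le> exp (- (real N / (2 * real k)) / 8)"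
    proof (rule lower_tail[OF nn rho_sum])
      show "{r} \<subseteq> {..<R}" using r LR by auto
      show "0 \<le> real N / (2 * real k)" by simp
      have "1 / (2 * real k) \<le> rho r" using r by (simp add: L_def)
      then have "real N * (1 / (2 * real k)) \<le> real N * rho r" by (rule mult_left_mono) simp
      then show "real N / (2 * real k) \<le> real N * sum rho {r}" by simp
    qed (unfold Bad2_def, simp)
    also have "\<dots> \<le> exp (- ln (2 * real R / \<Delta>))"
    proof -
      have "ln (2 * real R / \<Delta>) \<le> real N / (16 * real k)" using h2 k0 by (simp add: pos_le_divide_eq mult.commute)
      moreover have "real N / (2 * real k) / 8 = real N / (16 * real k)" by simp
      ultimately show ?thesis by simp
    qed
    also have "\<dots> = \<Delta> / (2 * real R)" using Delta R0 by (simp add: exp_neg_ln)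
    finally show ?thesis .
  qed
  define Bad where "Bad = (\<lambda>Y. Bad1 Y \<or> (\<exists>r\<in>L. Bad2 r Y))"
  have PB: "sample_prob R N rho Bad \<le> \<Delta>"
  proof -
    have "sample_prob R N rho Bad \<le> sample_prob R N rho Bad1 + sample_prob R N rho (\<lambda>Y. \<exists>r\<in>L. Bad2 r Y)"
      unfolding Bad_def by (rule sp_union[OF nn])
    also have "\<dots> \<le> \<Delta> / 2 + (\<Sum>r\<in>L. sample_prob R N rho (Bad2 r))"
      using P1 sp_Union[where R=R and N=N and rho=rho and E=Bad2, OF nn finL] by simp
    also have "\<dots> \<le> \<Delta> / 2 + (\<Sum>r\<in>L. \<Delta> / (2 * real R))"
      by (rule add_left_mono, rule sum_mono, rule P2)
    also have "\<dots> = \<Delta> / 2 + real (card L) * (\<Delta> / (2 * real R))" by simp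
    also have "\<dots> \<le> \<Delta> / 2 + real R * (\<Delta> / (2 * real R))"
      using cardL Delta R0 by (intro add_left_mono mult_right_mono) auto
    also have "\<dots> = \<Delta>" using R0 by simp
    finally show ?thesis .
  qed
  have "1 - \<Delta> \<le> sample_prob R N rho (\<lambda>Y. \<not> Bad Y)"
    using PB sp_compl[OF rho_sum, of N Bad] by simp
  also have "\<dots> \<le> sample_prob R N rho (\<lambda>Y.
         1 - tau_of R k rho \<ge>
           (if gamma_of R (4 * real k) (emp_freq N Y) = 0 then 0
            else C_const / 2 * inverse (1 + (1 - gamma_of R (4 * real k) (emp_freq N Y)) / gamma_of R (4 * real k) (emp_freq N Y) * Cbar_const)
              * (1 - tau_of R k (emp_freq N Y))))"
  proof (rule sp_mono[OF nn])
    fix Y assume Y: "Y \<in> {..<N} \<rightarrow>\<^sub>E {..<R}" and nb: "\<not> Bad Y"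
    let ?p = "emp_freq N Y"
    let ?gh = "gamma_of R (4 * real k) ?p"
    have Nn: "N > 0" using Npos by simp
    have s1: "(\<Sum>r<R. ?p r) = 1" by (rule emp_sum[OF Y Nn])
    have tau0: "0 \<le> 1 - tau_of R k rho" by (rule tau_nonneg[OF nn rho_sum])
    have half: "g / 2 \<le> 1 - tau_of R k rho"
      unfolding gS by (rule sum_half[OF nn rho_sum SR _ k1]) (auto simp: S_def)
    have large: "?p r > 1 / (4 * real k)" if "r \<in> L" for r
    proof -
      have "cnt N {r} Y > real N / (4 * real k)" using nb that unfolding Bad_def Bad2_def by auto
      then have "cnt N {r} Y / real N > (real N / (4 * real k)) / real N"
        using Npos by (intro divide_strict_right_mono) auto
      then show ?thesis using Npos by (simp add: emp_cnt)
    qed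
    have "?gh \<le> (\<Sum>r\<in>S. ?p r)"
      unfolding gamma_of_def
    proof (rule sum_mono2[OF finS])
      show "{r. r < R \<and> ?p r \<le> 1 / (4 * real k)} \<subseteq> S"
      proof
        fix r assume "r \<in> {r. r < R \<and> ?p r \<le> 1 / (4 * real k)}"
        then have "r < R" "?p r \<le> 1 / (4 * real k)" by auto
        then have "r \<notin> L" using large by fastforce
        then show "r \<in> S" using \<open>r < R\<close> by (simp add: L_def S_def)
      qed
    qed (simp add: emp_nonneg)
    also have "(\<Sum>r\<in>S. ?p r) = cnt N S Y / real N"
      unfolding emp_cnt sum_divide_distrib[symmetric] sum_cnt[OF finS] ..
    also have "\<dots> < 2 * g"
    proof -
      have "cnt N S Y < 2 * (real N * g)" using nb unfolding Bad_def Bad1_def by auto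
      then show ?thesis using Npos by (simp add: divide_less_eq mult.commute mult.left_commute)
    qed
    finally have ghg: "?gh < 2 * g" .
    show "(if ?gh = 0 then 0
            else C_const / 2 * inverse (1 + (1 - ?gh) / ?gh * Cbar_const) * (1 - tau_of R k ?p)) \<le> 1 - tau_of R k rho"
    proof (cases "?gh = 0")
      case True
      then show ?thesis using tau0 by simp
    next
      case False
      have "?gh \<ge> 0" unfolding gamma_of_def by (rule sum_nonneg) (simp add: emp_nonneg)
      then have "?gh > 0" using False by simp
      then have "C_const / 2 * inverse (1 + (1 - ?gh) / ?gh * Cbar_const) * (1 - tau_of R k ?p) \<le> ?gh / 4"
        by (intro key_bound[OF _ s1 k1]) (simp_all add: emp_nonneg)
      moreover have "?gh / 4 \<le> 1 - tau_of R k rho" using ghg half by linarith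
      ultimately show ?thesis using False by (simp only: if_False)
    qed
  qed
  finally show ?thesis .
qed


theorem mainTheorem2:
  fixes R N k :: nat and rho :: "nat \<Rightarrow> real" and \<Delta> :: real
  assumes R2: "R \<ge> 2"
    and rho_pos: "\<And>r. r < R \<Longrightarrow> rho r > 0"
    and rho_sum: "(\<Sum>r<R. rho r) = 1"
    and k1: "k \<ge> 1"
    and Delta: "0 < \<Delta>" "\<Delta> < 1"
  shows
    "(gamma_of R (4 * real k) rho > 0 \<and>
      real N \<ge> 8 / gamma_of R (4 * real k) rho * ln (2 / \<Delta>) + 12 * real k * ln (2 * real R / \<Delta>)
      \<longrightarrow>
      sample_prob R N rho (\<lambda>Y.
         1 - tau_of R k (emp_freq N Y) \<ge>
           C_const / 2 * inverse (1 + (1 - gamma_of R (4 * real k) rho) / gamma_of R (4 * real k) rho * Cbar_const)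
           * (1 - tau_of R k rho)) \<ge> 1 - \<Delta>)
     \<and>
     (gamma_of R (2 * real k) rho > 0 \<and>
      real N \<ge> 3 / gamma_of R (2 * real k) rho * ln (2 / \<Delta>) + 16 * real k * ln (2 * real R / \<Delta>)
      \<longrightarrow>
      sample_prob R N rho (\<lambda>Y.
         1 - tau_of R k rho \<ge>
           (if gamma_of R (4 * real k) (emp_freq N Y) = 0 then 0
            else C_const / 2 * inverse (1 + (1 - gamma_of R (4 * real k) (emp_freq N Y)) / gamma_of R (4 * real k) (emp_freq N Y) * Cbar_const)
              * (1 - tau_of R k (emp_freq N Y)))) \<ge> 1 - \<Delta>)"
  using part1[OF R2 rho_pos rho_sum k1 Delta] part2[OF R2 rho_pos rho_sum k1 Delta] by blast

end
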